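(* Let $r$ be a constant integer, $f\in\mathscr{F}_r$ given through an $r$-decomposition $(V_i,f_i)_{i=1}^m$, and $k$ an integer with $r<k\le n-1$, and suppose $V$ is connected. Then the star exploration algorithm outputs a connected set $S\subseteq V$ with $|S|\le k$ that is an $O(k^{r-1})$-approximate solution of the $\underline{k}$SPM problem, i.e. $\max\{f(T):T\subseteq V,|T|\le k\}\le O(k^{r-1})\cdot f(S)$. Star exploration: for each $v\in V$, let $T^v$ be the output of the batch-greedy augmenting algorithm applied to $f^{\{v\}}$ on ground set $V\setminus\{v\}$ with parameters $r-1$ and $k-1$; let $L^v=\{u\in T^v: f^{\{v\}}(u\mid T^v\setminus\{u\})>0\}$, $S^v=L^v\cup\{v\}$; output a set $S^v$ maximizing $f(S^v)$.
   Context: $V$ is a finite set, $n=|V|$; $g(u\mid T)=g(T\cup\{u\})-g(T)$. Supermodular: $g(A)+g(B)\le g(A\cup B)+g(A\cap B)$; monotone: $g(B)\le g(A)$ for $B\subseteq A$. $\mathscr{F}_r$ is the family of nonnegative monotone supermodular $f:2^V\to\mathbb{R}_+$ admitting an $r$-decomposition: $V_1,\dots,V_m\subseteq V$ with $|V_i|\le r$ and nonnegative supermodular $f_i:2^{V_i}\to\mathbb{R}_+$ with $f(S)=\sum_i f_i(S\cap V_i)$. For nonempty $S\subseteq V$, $I_S=\{i:V_i\cap S\ne\emptyset\}$ and $f^S:2^{V\setminus S}\to\mathbb{R}$, $f^S(T)=\sum_{i\in I_S}\big(f_i((S\cup T)\cap V_i)-f_i(S\cap V_i)\big)$. The batch-greedy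 augmenting algorithm with function $g$ on ground set $U$ and integers $r',k'$: $T_0=\emptyset$, $t=\lfloor k'/r'\rfloor$; for $i=1,\dots,t$ choose an $r'$-subset $S_i$ of $U\setminus T_{i-1}$ maximizing $g(T_{i-1}\cup S_i)$, $T_i=T_{i-1}\cup S_i$; output any $k'$-subset of $U$ containing $T_t$. The underlying graph is $G=(V,E)$, $E=\bigcup_i\{uv:\{u,v\}\subseteq V_i,u\ne v\}$; a set $S$ is connected if $G[S]$ is connected; "$V$ is connected" means $G$ is connected. The $\underline{k}$SPM problem asks for $S\subseteq V$ with $|S|\le k$ maximizing $f(S)$ (no connectivity requirement). Constants in $O(\cdot)$ may depend on $r$. *)

theory Defs
  imports Complex_Main
begin

(* Elements of the ground set are natural numbers (any finite set can be encoded so). *)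

definition supermodular_on :: "'a set \<Rightarrow> ('a set \<Rightarrow> real) \<Rightarrow> bool" where
  "supermodular_on W g \<longleftrightarrow>
     (\<forall>A B. A \<subseteq> W \<longrightarrow> B \<subseteq> W \<longrightarrow> g A + g B \<le> g (A \<union> B) + g (A \<inter> B))"

definition monotone_on_sets :: "'a set \<Rightarrow> ('a set \<Rightarrow> real) \<Rightarrow> bool" where
  "monotone_on_sets W g \<longleftrightarrow> (\<forall>A B. A \<subseteq> W \<longrightarrow> B \<subseteq> A \<longrightarrow> g B \<le> g A)"

definition nonneg_on :: "'a set \<Rightarrow> ('a set \<Rightarrow> real) \<Rightarrow> bool" where
  "nonneg_on W g \<longleftrightarrow> (\<forall>A. A \<subseteq> W \<longrightarrow> 0 \<le> g A)"

definition r_decomposition ::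
  "nat \<Rightarrow> 'a set \<Rightarrow> ('a set \<Rightarrow> real) \<Rightarrow> nat \<Rightarrow> (nat \<Rightarrow> 'a set) \<Rightarrow> (nat \<Rightarrow> 'a set \<Rightarrow> real) \<Rightarrow> bool" where
  "r_decomposition r V f m Vs fs \<longleftrightarrow>
     (\<forall>i<m. Vs i \<subseteq> V \<and> card (Vs i) \<le> r \<and> nonneg_on (Vs i) (fs i) \<and> supermodular_on (Vs i) (fs i))
     \<and> (\<forall>S. S \<subseteq> V \<longrightarrow> f S = (\<Sum>i<m. fs i (S \<inter> Vs i)))"

definition in_Fr_with ::
  "nat \<Rightarrow> 'a set \<Rightarrow> ('a set \<Rightarrow> real) \<Rightarrow> nat \<Rightarrow> (nat \<Rightarrow> 'a set) \<Rightarrow> (nat \<Rightarrow> 'a set \<Rightarrow> real) \<Rightarrow> bool" where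
  "in_Fr_with r V f m Vs fs \<longleftrightarrow>
     finite V \<and> nonneg_on V f \<and> monotone_on_sets V f \<and> supermodular_on V f \<and> r_decomposition r V f m Vs fs"

text \<open>The function f^S (defined for T subset of V - S).\<close>
definition f_sup :: "nat \<Rightarrow> (nat \<Rightarrow> 'a set) \<Rightarrow> (nat \<Rightarrow> 'a set \<Rightarrow> real) \<Rightarrow> 'a set \<Rightarrow> 'a set \<Rightarrow> real" where
  "f_sup m Vs fs S T = (\<Sum>i\<in>{i. i < m \<and> Vs i \<inter> S \<noteq> {}}. fs i ((S \<union> T) \<inter> Vs i) - fs i (S \<inter> Vs i))"

definition batch_greedy_run :: "('a set \<Rightarrow> real) \<Rightarrow> 'a set \<Rightarrow> nat \<Rightarrow> nat \<Rightarrow> (nat \<Rightarrow> 'a set) \<Rightarrow> bool" where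
  "batch_greedy_run g U r' k' Ts \<longleftrightarrow>
     Ts 0 = {} \<and>
     (\<forall>i\<in>{1..k' div r'}. \<exists>Si. Si \<subseteq> U - Ts (i - 1) \<and> card Si = r' \<and>
        (\<forall>S'. S' \<subseteq> U - Ts (i - 1) \<longrightarrow> card S' = r' \<longrightarrow> g (Ts (i - 1) \<union> S') \<le> g (Ts (i - 1) \<union> Si)) \<and>
        Ts i = Ts (i - 1) \<union> Si)"

text \<open>All possible outputs of the batch-greedy augmenting algorithm (over all tie-breakings).\<close>
definition batch_greedy_outputs :: "('a set \<Rightarrow> real) \<Rightarrow> 'a set \<Rightarrow> nat \<Rightarrow> nat \<Rightarrow> 'a set set" where
  "batch_greedy_outputs g U r' k' =
     {X. \<exists>Ts. batch_greedy_run g U r' k' Ts \<and> X \<subseteq> U \<and> card X = k' \<and> Ts (k' div r') \<subseteq> X}"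

definition star_set :: "nat \<Rightarrow> (nat \<Rightarrow> 'a set) \<Rightarrow> (nat \<Rightarrow> 'a set \<Rightarrow> real) \<Rightarrow> 'a \<Rightarrow> 'a set \<Rightarrow> 'a set" where
  "star_set m Vs fs v Tv =
     {u \<in> Tv. f_sup m Vs fs {v} Tv - f_sup m Vs fs {v} (Tv - {u}) > 0} \<union> {v}"

definition star_exploration_outputs ::
  "nat \<Rightarrow> 'a set \<Rightarrow> ('a set \<Rightarrow> real) \<Rightarrow> nat \<Rightarrow> (nat \<Rightarrow> 'a set) \<Rightarrow> (nat \<Rightarrow> 'a set \<Rightarrow> real) \<Rightarrow> nat \<Rightarrow> 'a set set" where
  "star_exploration_outputs r V f m Vs fs k =
     {S. \<exists>T. (\<forall>v\<in>V. T v \<in> batch_greedy_outputs (f_sup m Vs fs {v}) (V - {v}) (r - 1) (k - 1)) \<and>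
          (\<exists>v\<in>V. S = star_set m Vs fs v (T v) \<and>
                 (\<forall>w\<in>V. f (star_set m Vs fs w (T w)) \<le> f S))}"

definition adj :: "nat \<Rightarrow> (nat \<Rightarrow> 'a set) \<Rightarrow> 'a \<Rightarrow> 'a \<Rightarrow> bool" where
  "adj m Vs u v \<longleftrightarrow> u \<noteq> v \<and> (\<exists>i<m. u \<in> Vs i \<and> v \<in> Vs i)"

text \<open>G[S] is connected (connected graphs are nonempty by convention).\<close>
definition connected_set :: "nat \<Rightarrow> (nat \<Rightarrow> 'a set) \<Rightarrow> 'a set \<Rightarrow> bool" where
  "connected_set m Vs S \<longleftrightarrow> S \<noteq> {} \<and>
     (\<forall>x\<in>S. \<forall>y\<in>S. (\<lambda>a b. a \<in> S \<and> b \<in> S \<and> adj m Vs a b)\<^sup>*\<^sup>* x y)"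

end

theory Submission
  imports Defs
begin

lemma exists_ge_avg:
  fixes h :: "'b \<Rightarrow> real"
  assumes "finite S" "S \<noteq> {}"
  shows "\<exists>x\<in>S. sum h S \<le> real (card S) * h x"
proof -
  have "Max (h ` S) \<in> h ` S" using assms by (intro Max_in) auto
  then obtain x where x: "x \<in> S" "h x = Max (h ` S)" by auto
  have "\<forall>y\<in>S. h y \<le> h x" using x assms by auto
  then have "sum h S \<le> sum (\<lambda>_. h x) S" by (intro sum_mono) auto
  then show ?thesis using x by (intro bexI[of _ x]) auto
qed

lemma extend_subset:
  assumes "finite M" "Z \<subseteq> M" "card Z \<le> p" "p \<le> card M"
  shows "\<exists>P. Z \<subseteq> P \<and> P \<subseteq> M \<and> card P = p"
proof -
  have fz: "finite Z" using assms finite_subset by blast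
  have "card (M - Z) = card M - card Z" using assms fz by (simp add: card_Diff_subset)
  then have "p - card Z \<le> card (M - Z)" using assms by auto
  then obtain Q where Q: "Q \<subseteq> M - Z" "card Q = p - card Z" using obtain_subset_with_card_n by metis
  have fq: "finite Q" using Q assms finite_subset by (meson finite_Diff)
  have "card (Z \<union> Q) = card Z + card Q" using Q fz fq by (intro card_Un_disjoint) auto
  then show ?thesis using Q assms by (intro exI[of _ "Z \<union> Q"]) auto
qed

lemma count_subsets_with:
  assumes "finite M" "u \<in> M" "1 \<le> p"
  shows "card {P. (P \<subseteq> M \<and> card P = p) \<and> u \<in> P} \<le> (card M - 1) choose (p - 1)"
proof -
  have "inj_on (\<lambda>P. P - {u}) {P. (P \<subseteq> M \<and> card P = p) \<and> u \<in> P}"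
    by (rule inj_onI) (metis insert_Diff mem_Collect_eq)
  moreover have "(\<lambda>P. P - {u}) ` {P. (P \<subseteq> M \<and> card P = p) \<and> u \<in> P} \<subseteq> {Q. Q \<subseteq> M - {u} \<and> card Q = p - 1}"
  proof
    fix Q assume "Q \<in> (\<lambda>P. P - {u}) ` {P. (P \<subseteq> M \<and> card P = p) \<and> u \<in> P}"
    then obtain P where P: "P \<subseteq> M" "card P = p" "u \<in> P" "Q = P - {u}" by auto
    have "finite P" using P assms finite_subset by blast
    then show "Q \<in> {Q. Q \<subseteq> M - {u} \<and> card Q = p - 1}" using P by auto
  qed
  moreover have "finite {Q. Q \<subseteq> M - {u} \<and> card Q = p - 1}" using assms by auto
  ultimately have "card {P. (P \<subseteq> M \<and> card P = p) \<and> u \<in> P} \<le> card {Q. Q \<subseteq> M - {u} \<and> card Q = p - 1}"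
    by (meson card_inj_on_le)
  also have "\<dots> = card (M - {u}) choose (p - 1)" using assms by (intro n_subsets) auto
  also have "card (M - {u}) = card M - 1" using assms by auto
  finally show ?thesis .
qed

lemma sum_card_int:
  assumes "finite M" "1 \<le> p"
  shows "(\<Sum>P\<in>{P. P \<subseteq> M \<and> card P = p}. card (P \<inter> W)) \<le> card (M \<inter> W) * ((card M - 1) choose (p - 1))"
proof -
  let ?F = "{P. P \<subseteq> M \<and> card P = p}"
  have fF: "finite ?F" using assms by auto
  have "\<And>P. P \<in> ?F \<Longrightarrow> card (P \<inter> W) = (\<Sum>u\<in>M \<inter> W. if u \<in> P then 1 else 0)"
  proof -
    fix P assume "P \<in> ?F"
    then have "P \<inter> W = M \<inter> W \<inter> P" by auto
    then show "card (P \<inter> W) = (\<Sum>u\<in>M \<inter> W. if u \<in> P then 1 else 0)"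
      using assms by (simp add: sum.If_cases)
  qed
  then have "(\<Sum>P\<in>?F. card (P \<inter> W)) = (\<Sum>P\<in>?F. \<Sum>u\<in>M \<inter> W. if u \<in> P then 1 else 0)"
    by (intro sum.cong) auto
  also have "\<dots> = (\<Sum>u\<in>M \<inter> W. \<Sum>P\<in>?F. if u \<in> P then 1 else 0)" by (rule sum.swap)
  also have "\<dots> = (\<Sum>u\<in>M \<inter> W. card {P \<in> ?F. u \<in> P})"
    using fF by (intro sum.cong) (auto simp: sum.If_cases Int_def conj_assoc)
  also have "\<dots> \<le> (\<Sum>u\<in>M \<inter> W. (card M - 1) choose (p - 1))"
  proof (intro sum_mono)
    fix u assume "u \<in> M \<inter> W"
    then show "card {P \<in> ?F. u \<in> P} \<le> (card M - 1) choose (p - 1)"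
      using count_subsets_with[of M u p] assms by auto
  qed
  finally show ?thesis by simp
qed

locale dec =
  fixes V :: "nat set" and r m :: nat and Vs :: "nat \<Rightarrow> nat set" and fs :: "nat \<Rightarrow> nat set \<Rightarrow> real"
  assumes finV: "finite V"
  and Vs_sub: "i < m \<Longrightarrow> Vs i \<subseteq> V"
  and card_Vs: "i < m \<Longrightarrow> card (Vs i) \<le> r"
  and fs_nn: "i < m \<Longrightarrow> A \<subseteq> Vs i \<Longrightarrow> 0 \<le> fs i A"
  and fs_sm: "i < m \<Longrightarrow> A \<subseteq> Vs i \<Longrightarrow> B \<subseteq> Vs i \<Longrightarrow> fs i A + fs i B \<le> fs i (A \<union> B) + fs i (A \<inter> B)"
begin

definition II :: "nat \<Rightarrow> nat set" where "II v = {i. i < m \<and> v \<in> Vs i}"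
definition g :: "nat \<Rightarrow> nat set \<Rightarrow> real" where
  "g v Z = (\<Sum>i\<in>II v. fs i (insert v Z \<inter> Vs i) - fs i {v})"
definition c :: "nat \<Rightarrow> nat set \<Rightarrow> real" where
  "c v Z = (\<Sum>i\<in>II v. real (card (Z \<inter> Vs i)) * fs i {})"
definition phi :: "nat \<Rightarrow> nat \<Rightarrow> nat set \<Rightarrow> real" where
  "phi v i Z = fs i (insert v Z \<inter> Vs i) - fs i {v} + real (card (Z \<inter> Vs i)) * fs i {}"
definition psi :: "nat \<Rightarrow> nat set \<Rightarrow> real" where
  "psi v Z = (\<Sum>i\<in>II v. phi v i Z)"

lemma finII: "finite (II v)" unfolding II_def by auto

lemma finVs: "i < m \<Longrightarrow> finite (Vs i)" using Vs_sub finV finite_subset by blast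

lemma f_sup_eq: "f_sup m Vs fs {v} Z = g v Z"
proof -
  have "{i. i < m \<and> Vs i \<inter> {v} \<noteq> {}} = II v" unfolding II_def by auto
  moreover have "\<And>i. i \<in> II v \<Longrightarrow> {v} \<inter> Vs i = {v}" unfolding II_def by auto
  ultimately show ?thesis unfolding f_sup_def g_def by (intro sum.cong) auto
qed

lemma psi_eq: "psi v Z = g v Z + c v Z"
  unfolding psi_def g_def c_def phi_def by (simp add: sum.distrib[symmetric])

lemma g_empty: "g v {} = 0"
  unfolding g_def II_def by (intro sum.neutral) (auto simp: insert_absorb Int_absorb1 intro!: arg_cong[where f="fs _"])

lemma c_nonneg: "0 \<le> c v Z"
  unfolding c_def II_def by (intro sum_nonneg mult_nonneg_nonneg fs_nn) auto

lemma c_add: "A \<inter> B = {} \<Longrightarrow> c v (A \<union> B) = c v A + c v B"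
proof -
  assume d: "A \<inter> B = {}"
  have "\<And>i. i \<in> II v \<Longrightarrow> card ((A \<union> B) \<inter> Vs i) = card (A \<inter> Vs i) + card (B \<inter> Vs i)"
  proof -
    fix i assume "i \<in> II v"
    then have f: "finite (Vs i)" using finVs unfolding II_def by auto
    have "(A \<union> B) \<inter> Vs i = (A \<inter> Vs i) \<union> (B \<inter> Vs i)" by auto
    then show "card ((A \<union> B) \<inter> Vs i) = card (A \<inter> Vs i) + card (B \<inter> Vs i)"
      using f d by (simp add: card_Un_disjoint disjoint_iff)
  qed
  then show ?thesis unfolding c_def by (simp add: sum.distrib[symmetric] distrib_right)
qed

lemma c_le: "c v Z \<le> real r * (\<Sum>i<m. fs i {})"
proof -
  have "c v Z \<le> (\<Sum>i\<in>II v. real r * fs i {})"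
    unfolding c_def
  proof (intro sum_mono mult_right_mono)
    fix i assume i: "i \<in> II v"
    then have "card (Z \<inter> Vs i) \<le> card (Vs i)" using finVs unfolding II_def by (auto intro: card_mono)
    then show "real (card (Z \<inter> Vs i)) \<le> real r" using card_Vs[of i] i unfolding II_def by auto
    show "0 \<le> fs i {}" using i fs_nn unfolding II_def by auto
  qed
  also have "\<dots> \<le> (\<Sum>i<m. real r * fs i {})"
    by (intro sum_mono2) (auto simp: II_def intro!: mult_nonneg_nonneg fs_nn)
  finally show ?thesis by (simp add: sum_distrib_left)
qed

lemma g_supermod:
  assumes "v \<notin> A" "v \<notin> B"
  shows "g v A + g v B \<le> g v (A \<union> B) + g v (A \<inter> B)"
proof -
  have "\<And>i. i \<in> II v \<Longrightarrow> fs i (insert v A \<inter> Vs i) + fs i (insert v B \<inter> Vs i)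
     \<le> fs i (insert v (A \<union> B) \<inter> Vs i) + fs i (insert v (A \<inter> B) \<inter> Vs i)"
  proof -
    fix i assume i: "i \<in> II v"
    have "fs i (insert v A \<inter> Vs i) + fs i (insert v B \<inter> Vs i)
       \<le> fs i ((insert v A \<inter> Vs i) \<union> (insert v B \<inter> Vs i)) + fs i ((insert v A \<inter> Vs i) \<inter> (insert v B \<inter> Vs i))"
      using i unfolding II_def by (intro fs_sm) auto
    moreover have "(insert v A \<inter> Vs i) \<union> (insert v B \<inter> Vs i) = insert v (A \<union> B) \<inter> Vs i" by auto
    moreover have "(insert v A \<inter> Vs i) \<inter> (insert v B \<inter> Vs i) = insert v (A \<inter> B) \<inter> Vs i" by auto
    ultimately show "?thesis i" by simp
  qed
  then show ?thesis unfolding g_def by (simp add: sum.distrib[symmetric] sum_mono)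
qed

lemma phi_mono:
  assumes i: "i \<in> II v" and sub: "Z \<subseteq> Z'" and nv: "v \<notin> Z'"
  shows "phi v i Z \<le> phi v i Z'"
proof -
  have im: "i < m" "v \<in> Vs i" using i unfolding II_def by auto
  have f: "finite (Vs i)" using finVs im by auto
  define D where "D = (Z' - Z) \<inter> Vs i"
  define Aa where "Aa = insert v Z \<inter> Vs i"
  have AD: "Aa \<union> D = insert v Z' \<inter> Vs i" unfolding Aa_def D_def using sub by auto
  have AD2: "Aa \<inter> D = {}" unfolding Aa_def D_def using nv by auto
  have cd: "card (Z' \<inter> Vs i) = card (Z \<inter> Vs i) + card D"
  proof -
    have "Z' \<inter> Vs i = (Z \<inter> Vs i) \<union> D" unfolding D_def using sub by auto
    moreover have "(Z \<inter> Vs i) \<inter> D = {}" unfolding D_def by auto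
    moreover have "finite (Z \<inter> Vs i)" "finite D" using f unfolding D_def by auto
    ultimately show ?thesis by (simp add: card_Un_disjoint)
  qed
  have sm: "fs i Aa + fs i D \<le> fs i (Aa \<union> D) + fs i {}"
    using fs_sm[OF im(1), of Aa D] AD2 unfolding Aa_def D_def by auto
  have e0: "0 \<le> fs i {}" "0 \<le> fs i D" using fs_nn im unfolding D_def by auto
  show ?thesis
  proof (cases "D = {}")
    case True
    then have "insert v Z' \<inter> Vs i = Aa" using AD by auto
    then show ?thesis using cd True unfolding phi_def Aa_def by simp
  next
    case False
    then have "card D \<ge> 1" using f unfolding D_def by (simp add: Suc_leI card_gt_0_iff)
    then have "real (card D) * fs i {} \<ge> fs i {}" using e0 by (simp add: mult_le_cancel_right1)
    then show ?thesis using sm e0 cd AD unfolding phi_def Aa_def[symmetric]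
      by (simp add: algebra_simps)
  qed
qed

lemma psi_mono: "Z \<subseteq> Z' \<Longrightarrow> v \<notin> Z' \<Longrightarrow> psi v Z \<le> psi v Z'"
  unfolding psi_def by (intro sum_mono phi_mono)

lemma phi_cong:
  assumes "i \<in> II v" "Z \<inter> Vs i = Z' \<inter> Vs i"
  shows "phi v i Z = phi v i Z'"
proof -
  have "insert v Z \<inter> Vs i = insert v Z' \<inter> Vs i" using assms by auto
  then show ?thesis unfolding phi_def using assms by simp
qed

lemma step:
  assumes A: "v \<notin> A" "finite A"
    and M: "M \<inter> A = {}" "v \<notin> M" "finite M" "p \<le> card M"
    and p: "p = r - 1" "1 \<le> p"
  shows "\<exists>P. P \<subseteq> M \<and> card P = p \<and>
     psi v (A \<union> M) - psi v A - real ((card M - 1) choose (p - 1)) * c v M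
       \<le> real (card M choose p) * (g v (A \<union> P) - g v A)"
proof -
  let ?F = "{P. P \<subseteq> M \<and> card P = p}"
  let ?C = "(card M - 1) choose (p - 1)"
  have fF: "finite ?F" using M by auto
  have cF: "card ?F = card M choose p" using M by (intro n_subsets)
  have neF: "?F \<noteq> {}" using obtain_subset_with_card_n[OF M(4)] by auto
  have a: "psi v (A \<union> M) - psi v A \<le> (\<Sum>P\<in>?F. psi v (A \<union> P) - psi v A)"
  proof -
    have "(\<Sum>P\<in>?F. psi v (A \<union> P) - psi v A) = (\<Sum>P\<in>?F. \<Sum>i\<in>II v. phi v i (A \<union> P) - phi v i A)"
      unfolding psi_def by (simp add: sum_subtractf)
    also have "\<dots> = (\<Sum>i\<in>II v. \<Sum>P\<in>?F. phi v i (A \<union> P) - phi v i A)" by (rule sum.swap)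
    finally have eq: "(\<Sum>P\<in>?F. psi v (A \<union> P) - psi v A) = (\<Sum>i\<in>II v. \<Sum>P\<in>?F. phi v i (A \<union> P) - phi v i A)" .
    have "psi v (A \<union> M) - psi v A = (\<Sum>i\<in>II v. phi v i (A \<union> M) - phi v i A)"
      unfolding psi_def by (simp add: sum_subtractf)
    also have "\<dots> \<le> (\<Sum>i\<in>II v. \<Sum>P\<in>?F. phi v i (A \<union> P) - phi v i A)"
    proof (intro sum_mono)
      fix i assume i: "i \<in> II v"
      have im: "i < m" "v \<in> Vs i" using i unfolding II_def by auto
      have fv: "finite (Vs i)" using finVs im by auto
      have "card (M \<inter> Vs i) \<le> card (Vs i - {v})" using fv M by (intro card_mono) auto
      also have "\<dots> = card (Vs i) - 1" using fv im by simp
      also have "\<dots> \<le> p" using card_Vs[OF im(1)] p by simp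
      finally obtain Pi where Pi: "M \<inter> Vs i \<subseteq> Pi" "Pi \<subseteq> M" "card Pi = p"
        using extend_subset[of M "M \<inter> Vs i" p] M by auto
      have "phi v i (A \<union> M) = phi v i (A \<union> Pi)" using Pi by (intro phi_cong[OF i]) auto
      also have "phi v i (A \<union> Pi) - phi v i A \<le> (\<Sum>P\<in>?F. phi v i (A \<union> P) - phi v i A)"
      proof (rule member_le_sum)
        show "Pi \<in> ?F" using Pi by auto
        show "finite ?F" by (rule fF)
        fix P assume "P \<in> ?F - {Pi}"
        then have "v \<notin> A \<union> P" using A M by auto
        then show "0 \<le> phi v i (A \<union> P) - phi v i A" using phi_mono[OF i, of A "A \<union> P"] by auto
      qed
      finally show "phi v i (A \<union> M) - phi v i A \<le> (\<Sum>P\<in>?F. phi v i (A \<union> P) - phi v i A)" by simp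
    qed
    finally show ?thesis using eq by simp
  qed
  have b: "(\<Sum>P\<in>?F. c v P) \<le> real ?C * c v M"
  proof -
    have "(\<Sum>P\<in>?F. c v P) = (\<Sum>i\<in>II v. (\<Sum>P\<in>?F. real (card (P \<inter> Vs i))) * fs i {})"
      unfolding c_def by (subst sum.swap) (simp add: sum_distrib_right)
    also have "\<dots> \<le> (\<Sum>i\<in>II v. (real (card (M \<inter> Vs i)) * real ?C) * fs i {})"
    proof (intro sum_mono mult_right_mono)
      fix i assume i: "i \<in> II v"
      have "(\<Sum>P\<in>?F. card (P \<inter> Vs i)) \<le> card (M \<inter> Vs i) * ?C" using sum_card_int[of M p "Vs i"] M p by auto
      then have "real (\<Sum>P\<in>?F. card (P \<inter> Vs i)) \<le> real (card (M \<inter> Vs i) * ?C)" by linarith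
      then show "(\<Sum>P\<in>?F. real (card (P \<inter> Vs i))) \<le> real (card (M \<inter> Vs i)) * real ?C" by simp
      show "0 \<le> fs i {}" using i fs_nn unfolding II_def by auto
    qed
    also have "\<dots> = real ?C * c v M" unfolding c_def by (simp add: sum_distrib_left algebra_simps)
    finally show ?thesis .
  qed
  have cc: "\<And>P. P \<in> ?F \<Longrightarrow> g v (A \<union> P) - g v A = psi v (A \<union> P) - psi v A - c v P"
  proof -
    fix P assume "P \<in> ?F"
    then have "A \<inter> P = {}" using M by auto
    then show "g v (A \<union> P) - g v A = psi v (A \<union> P) - psi v A - c v P"
      using psi_eq[of v "A \<union> P"] psi_eq[of v A] c_add[of A P v] by simp
  qed
  have "psi v (A \<union> M) - psi v A - real ?C * c v M \<le> (\<Sum>P\<in>?F. g v (A \<union> P) - g v A)"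
  proof -
    have "(\<Sum>P\<in>?F. g v (A \<union> P) - g v A) = (\<Sum>P\<in>?F. psi v (A \<union> P) - psi v A) - (\<Sum>P\<in>?F. c v P)"
      using cc by (simp add: sum_subtractf[symmetric])
    then show ?thesis using a b by linarith
  qed
  moreover obtain P where "P \<in> ?F" "(\<Sum>P\<in>?F. g v (A \<union> P) - g v A) \<le> real (card ?F) * (g v (A \<union> P) - g v A)"
    using exists_ge_avg[OF fF neF, of "\<lambda>P. g v (A \<union> P) - g v A"] by auto
  ultimately show ?thesis using cF by (intro exI[of _ P]) auto
qed

lemma greedy_bound:
  assumes v: "v \<in> V" and r2: "2 \<le> r" and k: "r < k" "k \<le> card V - 1"
    and run: "batch_greedy_run (g v) (V - {v}) (r - 1) (k - 1) Ts"
    and F0: "0 \<le> F"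
    and Gam: "psi v (Ts ((k - 1) div (r - 1))) \<le> (1 + real r) * F"
    and cb: "\<And>Z. c v Z \<le> real r * F"
    and Y: "Y \<subseteq> V - {v}" "card Y \<le> k - 1"
  shows "psi v Y \<le> (14 * real r + 10) * real ((k - 2) choose (r - 2)) * F"
proof (rule ccontr)
  define p where "p = r - 1"
  define k' where "k' = k - 1"
  define t where "t = k' div p"
  define N where "N = k' choose p"
  define B where "B = (k' - 1) choose (p - 1)"
  define U where "U = V - {v}"
  have p1: "1 \<le> p" using r2 unfolding p_def by auto
  have kp: "p < k'" using k r2 unfolding p_def k'_def by auto
  have B_eq: "B = (k - 2) choose (r - 2)" unfolding B_def k'_def p_def by (simp add: numeral_2_eq_2)
  assume "\<not> psi v Y \<le> (14 * real r + 10) * real ((k - 2) choose (r - 2)) * F"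
  then have big: "psi v Y > (14 * real r + 10) * real B * F" using B_eq by simp
  have B1: "1 \<le> B" unfolding B_def using kp by (simp add: Suc_leI)
  have t1: "1 \<le> t"
  proof -
    have "p div p \<le> k' div p" using kp by (intro div_le_mono) auto
    then show ?thesis using p1 unfolding t_def by simp
  qed
  have ktp: "k' < p * (t + 1)"
  proof -
    have "t * p + k' mod p = k'" unfolding t_def by (rule div_mult_mod_eq)
    moreover have "k' mod p < p" using p1 by simp
    ultimately show ?thesis by (simp add: algebra_simps)
  qed
  have tp: "t * p \<le> k'" unfolding t_def by simp
  have NB: "real N * real p = real k' * real B"
  proof -
    have "p * (k' choose p) = k' * ((k' - 1) choose (p - 1))" using p1 by (intro times_binomial_minus1_eq) auto
    then show ?thesis unfolding N_def B_def by (metis of_nat_mult mult.commute)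
  qed
  have N2: "real N \<le> 2 * real t * real B"
  proof -
    have "p * 1 \<le> p * t" using t1 by (intro mult_le_mono2)
    moreover have "p * (t + 1) = p * t + p" "2 * t * p = p * t + p * t" by (simp_all add: algebra_simps)
    ultimately have "k' \<le> 2 * t * p" using ktp by linarith
    then have "real k' \<le> 2 * real t * real p" by (metis of_nat_le_iff of_nat_mult of_nat_numeral)
    then have "real k' * real B \<le> (2 * real t * real p) * real B" by (intro mult_right_mono) auto
    then have "real N * real p \<le> (2 * real t * real B) * real p" using NB by (simp add: algebra_simps)
    then show ?thesis using p1 by (simp add: mult_le_cancel_right)
  qed
  have Ts0: "Ts 0 = {}" using run unfolding batch_greedy_run_def by auto
  have stepTs: "\<And>j. 1 \<le> j \<Longrightarrow> j \<le> t \<Longrightarrow> \<exists>Si. Si \<subseteq> U - Ts (j - 1) \<and> card Si = p \<and>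
        (\<forall>S'. S' \<subseteq> U - Ts (j - 1) \<longrightarrow> card S' = p \<longrightarrow> g v (Ts (j - 1) \<union> S') \<le> g v (Ts (j - 1) \<union> Si)) \<and>
        Ts j = Ts (j - 1) \<union> Si"
    using run unfolding batch_greedy_run_def t_def p_def k'_def U_def by auto
  have finU: "finite U" unfolding U_def using finV by auto
  have inv: "j \<le> t \<Longrightarrow> Ts j \<subseteq> U \<and> card (Ts j) = j * p" for j
  proof (induction j)
    case 0 then show ?case using Ts0 by auto
  next
    case (Suc j)
    then obtain Si where Si: "Si \<subseteq> U - Ts j" "card Si = p" "Ts (Suc j) = Ts j \<union> Si"
      using stepTs[of "Suc j"] by auto
    have "finite (Ts j)" using Suc finU finite_subset by auto
    moreover have "finite Si" using Si(1) finU by (meson finite_Diff finite_subset)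
    moreover have "Ts j \<inter> Si = {}" using Si by auto
    ultimately have "card (Ts j \<union> Si) = card (Ts j) + card Si" by (intro card_Un_disjoint)
    then have "card (Ts (Suc j)) = card (Ts j) + card Si" using Si by simp
    then show ?case using Suc Si by auto
  qed
  have chain: "j \<le> t \<Longrightarrow> i \<le> j \<Longrightarrow> Ts i \<subseteq> Ts j" for i j
  proof (induction j)
    case 0 then show ?case by auto
  next
    case (Suc j)
    obtain Si where "Ts (Suc j) = Ts j \<union> Si" using stepTs[of "Suc j"] Suc by auto
    then show ?case using Suc by (cases "i = Suc j") auto
  qed
  have psiA: "j \<le> t \<Longrightarrow> psi v (Ts j) \<le> (1 + real r) * F" for j
  proof -
    assume j: "j \<le> t"
    have "v \<notin> Ts t" using inv[of t] unfolding U_def by auto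
    then have "psi v (Ts j) \<le> psi v (Ts t)" using chain[of t j] j by (intro psi_mono) auto
    then show ?thesis using Gam unfolding t_def p_def k'_def by simp
  qed
  have cardU: "k' + 1 \<le> card U" using k finV unfolding U_def k'_def by (simp add: v)
  have KB0: "0 \<le> (14 * real r + 10) * real B * F" using F0 by simp
  have Ypos: "psi v Y > 0" using big KB0 by linarith
  have KB: "14 * real r + 10 \<le> (14 * real r + 10) * real B"
  proof -
    have "(14 * real r + 10) * 1 \<le> (14 * real r + 10) * real B" using B1 by (intro mult_left_mono) auto
    then show ?thesis by simp
  qed
  have half: "(1 + real r) * F \<le> psi v Y / 2"
  proof -
    have "2 + 2 * real r \<le> (14 * real r + 10) * real B" using KB by linarith
    then have "(2 + 2 * real r) * F \<le> ((14 * real r + 10) * real B) * F"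
      using F0 by (intro mult_right_mono) auto
    then show ?thesis using big by (simp add: algebra_simps)
  qed
  have quarter: "real B * (real r * F) \<le> psi v Y / 4"
  proof -
    have BF: "0 \<le> real B * F" using F0 by simp
    have "4 * real r * (real B * F) \<le> (14 * real r + 10) * (real B * F)"
      using BF by (intro mult_right_mono) auto
    moreover have "4 * (real B * (real r * F)) = 4 * real r * (real B * F)" by (simp add: algebra_simps)
    moreover have "(14 * real r + 10) * real B * F = (14 * real r + 10) * (real B * F)" by (simp add: algebra_simps)
    ultimately show ?thesis using big by linarith
  qed
  have delta: "1 \<le> j \<Longrightarrow> j \<le> t \<Longrightarrow> psi v Y / 4 \<le> real N * (g v (Ts j) - g v (Ts (j - 1)))" for j
  proof -
    assume j: "1 \<le> j" "j \<le> t"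
    define A where "A = Ts (j - 1)"
    obtain Si where Si: "Si \<subseteq> U - A" "card Si = p"
      "\<And>S'. S' \<subseteq> U - A \<Longrightarrow> card S' = p \<Longrightarrow> g v (A \<union> S') \<le> g v (A \<union> Si)" "Ts j = A \<union> Si"
      using stepTs[OF j] unfolding A_def by auto
    have AU: "A \<subseteq> U" "card A = (j - 1) * p" using inv[of "j - 1"] j unfolding A_def by auto
    have finA: "finite A" using AU finU finite_subset by auto
    have cardUA: "p \<le> card (U - A)"
    proof -
      have "(j - 1) * p + p = j * p" using j by (cases j) auto
      moreover have "j * p \<le> t * p" using j by simp
      ultimately have "(j - 1) * p + p \<le> t * p" by simp
      then have "card A + p \<le> k'" using AU tp by simp
      moreover have "card (U - A) = card U - card A" using AU finA by (simp add: card_Diff_subset)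
      ultimately show ?thesis using cardU by linarith
    qed
    have YA: "Y - A \<subseteq> U - A" using Y unfolding U_def by auto
    obtain M where M: "Y - A \<subseteq> M" "M \<subseteq> U - A" "p \<le> card M" "card M \<le> k'"
    proof (cases "p \<le> card (Y - A)")
      case True
      have "card (Y - A) \<le> card Y" using Y finV by (intro card_mono) (auto intro: finite_subset)
      then show ?thesis using that[of "Y - A"] True YA Y unfolding k'_def by auto
    next
      case False
      obtain M where "Y - A \<subseteq> M" "M \<subseteq> U - A" "card M = p"
        using extend_subset[of "U - A" "Y - A" p] False cardUA YA finU by auto
      then show ?thesis using that[of M] kp by auto
    qed
    have finM: "finite M" using M finU finite_subset by blast
    obtain P where P: "P \<subseteq> M" "card P = p"
      "psi v (A \<union> M) - psi v A - real ((card M - 1) choose (p - 1)) * c v M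
         \<le> real (card M choose p) * (g v (A \<union> P) - g v A)"
      using step[of v A M p] M finA finM AU p1 unfolding U_def p_def by auto
    have gP: "g v (A \<union> P) \<le> g v (Ts j)" using Si P M by auto
    have psiM: "psi v Y \<le> psi v (A \<union> M)" using M AU unfolding U_def by (intro psi_mono) auto
    have "psi v A \<le> (1 + real r) * F" using psiA[of "j - 1"] j unfolding A_def by auto
    then have psiA': "psi v A \<le> psi v Y / 2" using half by linarith
    have CB: "(card M - 1) choose (p - 1) \<le> B" unfolding B_def using M by (intro binomial_right_mono) auto
    have cM: "real ((card M - 1) choose (p - 1)) * c v M \<le> real B * (real r * F)"
      using CB cb[of M] c_nonneg[of v M] F0 by (intro mult_mono) auto
    have CN: "card M choose p \<le> N" unfolding N_def using M by (intro binomial_right_mono) auto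
    have Cpos: "0 < card M choose p" using M by simp
    have "psi v Y / 4 \<le> real (card M choose p) * (g v (Ts j) - g v A)"
    proof -
      have "psi v Y / 4 \<le> real (card M choose p) * (g v (A \<union> P) - g v A)" using P(3) psiM psiA' cM quarter by linarith
      also have "\<dots> \<le> real (card M choose p) * (g v (Ts j) - g v A)" using gP by (intro mult_left_mono) auto
      finally show ?thesis .
    qed
    moreover have "0 \<le> g v (Ts j) - g v A"
    proof -
      have "0 < real (card M choose p) * (g v (Ts j) - g v A)" using calculation Ypos by linarith
      then show ?thesis using Cpos by (simp add: zero_less_mult_iff)
    qed
    moreover have "real (card M choose p) * (g v (Ts j) - g v A) \<le> real N * (g v (Ts j) - g v A)"
      using CN calculation(2) by (intro mult_right_mono) auto
    ultimately have "psi v Y / 4 \<le> real N * (g v (Ts j) - g v A)" by linarith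
    then show ?thesis unfolding A_def .
  qed
  have acc: "j \<le> t \<Longrightarrow> real j * (psi v Y / 4) \<le> real N * g v (Ts j)" for j
  proof (induction j)
    case 0 then show ?case using Ts0 g_empty by simp
  next
    case (Suc j)
    then have "psi v Y / 4 \<le> real N * (g v (Ts (Suc j)) - g v (Ts j))" using delta[of "Suc j"] by simp
    then show ?case using Suc by (simp add: algebra_simps)
  qed
  have "g v (Ts t) \<le> psi v (Ts t)" using psi_eq[of v "Ts t"] c_nonneg[of v "Ts t"] by simp
  also have "\<dots> \<le> (1 + real r) * F" using psiA by simp
  finally have gT: "g v (Ts t) \<le> (1 + real r) * F" .
  have "real t * (psi v Y / 4) \<le> real N * ((1 + real r) * F)"
    using acc[of t] mult_left_mono[OF gT, of "real N"] by simp
  also have "\<dots> \<le> (2 * real t * real B) * ((1 + real r) * F)" using N2 F0 by (intro mult_right_mono) auto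
  finally have "real t * psi v Y \<le> real t * (8 * real B * (1 + real r) * F)" by (simp add: algebra_simps)
  then have "psi v Y \<le> 8 * real B * (1 + real r) * F" using t1 by (simp add: mult_le_cancel_left)
  moreover have "8 * real B * (1 + real r) * F \<le> (14 * real r + 10) * real B * F"
  proof -
    have BF: "0 \<le> real B * F" using F0 by simp
    have "(8 + 8 * real r) * (real B * F) \<le> (14 * real r + 10) * (real B * F)"
      using BF by (intro mult_right_mono) auto
    then show ?thesis by (simp add: algebra_simps)
  qed
  ultimately show False using big by linarith
qed

lemma remove_nonpos:
  assumes nv: "v \<notin> X" and fX: "finite X"
  shows "g v X \<le> g v {u \<in> X. g v X - g v (X - {u}) > 0}"
proof -
  define D where "D = {u \<in> X. \<not> g v X - g v (X - {u}) > 0}"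
  have "E \<subseteq> D \<Longrightarrow> g v X \<le> g v (X - E)" for E
  proof -
    assume ED: "E \<subseteq> D"
    have fE: "finite E" using ED fX unfolding D_def by (auto intro: finite_subset)
    show ?thesis using fE ED
    proof (induction E rule: finite_induct)
      case empty then show ?case by simp
    next
      case (insert u E)
      have uD: "u \<in> D" using insert by auto
      have sm: "g v (X - E) + g v (X - {u}) \<le> g v ((X - E) \<union> (X - {u})) + g v ((X - E) \<inter> (X - {u}))"
        using nv by (intro g_supermod) auto
      have e1: "(X - E) \<union> (X - {u}) = X" using insert(2) by auto
      have e2: "(X - E) \<inter> (X - {u}) = X - insert u E" by auto
      have "g v X \<le> g v (X - {u})" using uD unfolding D_def by auto
      then show ?case using sm e1 e2 insert by auto
    qed
  qed
  moreover have "X - D = {u \<in> X. g v X - g v (X - {u}) > 0}" unfolding D_def by auto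
  ultimately show ?thesis by (metis order_refl)
qed

lemma adj_of_pos:
  assumes "g v X - g v (X - {u}) > 0"
  shows "\<exists>i\<in>II v. u \<in> Vs i"
proof (rule ccontr)
  assume "\<not> ?thesis"
  then have "\<And>i. i \<in> II v \<Longrightarrow> insert v X \<inter> Vs i = insert v (X - {u}) \<inter> Vs i" by auto
  then have "g v X = g v (X - {u})" unfolding g_def by (intro sum.cong) auto
  then show False using assms by simp
qed

lemma decomp_bound:
  assumes T: "T \<subseteq> V"
  shows "(\<Sum>i<m. fs i (T \<inter> Vs i)) \<le> (\<Sum>i<m. fs i {}) + (\<Sum>w\<in>T. g w (T - {w}) + (\<Sum>i\<in>II w. fs i {w}))"
proof -
  have fT: "finite T" using T finV finite_subset by auto
  define h where "h i w = fs i (insert w (T - {w}) \<inter> Vs i) - fs i {w} + fs i {w}" for i w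
  have per: "fs i (T \<inter> Vs i) \<le> fs i {} + (\<Sum>w\<in>{w \<in> T. w \<in> Vs i}. h i w)" if i: "i < m" for i
  proof -
    have hh: "\<And>w. w \<in> {w \<in> T. w \<in> Vs i} \<Longrightarrow> h i w = fs i (T \<inter> Vs i)"
      unfolding h_def by (simp add: insert_absorb)
    have e0: "0 \<le> fs i {}" "0 \<le> fs i (T \<inter> Vs i)" using fs_nn i by auto
    show ?thesis
    proof (cases "{w \<in> T. w \<in> Vs i} = {}")
      case True
      then have "T \<inter> Vs i = {}" by auto
      then show ?thesis using True by (simp only: sum.empty)
    next
      case False
      have fin: "finite {w \<in> T. w \<in> Vs i}" using fT by auto
      then have "1 \<le> card {w \<in> T. w \<in> Vs i}" using False by (simp add: Suc_leI card_gt_0_iff)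
      then have "fs i (T \<inter> Vs i) \<le> real (card {w \<in> T. w \<in> Vs i}) * fs i (T \<inter> Vs i)"
        using e0 by (simp add: mult_le_cancel_right1)
      also have "\<dots> = (\<Sum>w\<in>{w \<in> T. w \<in> Vs i}. h i w)" using hh by simp
      finally show ?thesis using e0 by simp
    qed
  qed
  have "(\<Sum>i<m. fs i (T \<inter> Vs i)) \<le> (\<Sum>i<m. fs i {} + (\<Sum>w\<in>{w \<in> T. w \<in> Vs i}. h i w))"
    using per by (intro sum_mono) auto
  also have "\<dots> = (\<Sum>i<m. fs i {}) + (\<Sum>i<m. \<Sum>w\<in>{w \<in> T. w \<in> Vs i}. h i w)" by (simp add: sum.distrib)
  also have "(\<Sum>i<m. \<Sum>w\<in>{w \<in> T. w \<in> Vs i}. h i w) = (\<Sum>w\<in>T. \<Sum>i\<in>{i \<in> {..<m}. w \<in> Vs i}. h i w)"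
    using fT by (intro sum.swap_restrict) auto
  also have "\<dots> = (\<Sum>w\<in>T. g w (T - {w}) + (\<Sum>i\<in>II w. fs i {w}))"
  proof (intro sum.cong refl)
    fix w assume "w \<in> T"
    have "{i \<in> {..<m}. w \<in> Vs i} = II w" unfolding II_def by auto
    then show "(\<Sum>i\<in>{i \<in> {..<m}. w \<in> Vs i}. h i w) = g w (T - {w}) + (\<Sum>i\<in>II w. fs i {w})"
      unfolding h_def g_def by (simp add: sum.distrib[symmetric])
  qed
  finally show ?thesis by simp
qed

lemma g_le_sum:
  assumes "L \<subseteq> V"
  shows "g w L \<le> (\<Sum>i<m. fs i (insert w L \<inter> Vs i))"
proof -
  have "g w L \<le> (\<Sum>i\<in>II w. fs i (insert w L \<inter> Vs i))"
    unfolding g_def by (intro sum_mono) (auto simp: II_def intro!: fs_nn)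
  also have "\<dots> \<le> (\<Sum>i<m. fs i (insert w L \<inter> Vs i))"
    by (intro sum_mono2) (auto simp: II_def intro!: fs_nn)
  finally show ?thesis .
qed

lemma single_le_sum:
  "(\<Sum>i\<in>II w. fs i {w}) \<le> (\<Sum>i<m. fs i ({w} \<inter> Vs i))"
proof -
  have "(\<Sum>i\<in>II w. fs i {w}) = (\<Sum>i\<in>II w. fs i ({w} \<inter> Vs i))"
    by (intro sum.cong) (auto simp: II_def)
  also have "\<dots> \<le> (\<Sum>i<m. fs i ({w} \<inter> Vs i))"
    by (intro sum_mono2) (auto simp: II_def intro!: fs_nn)
  finally show ?thesis .
qed

end

lemma main_r2:
  fixes V :: "nat set" and f :: "nat set \<Rightarrow> real"
  assumes Fr: "in_Fr_with r V f m Vs fs" and r2: "2 \<le> r" and k: "r < k" "k \<le> card V - 1"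
    and S: "S \<in> star_exploration_outputs r V f m Vs fs k"
  shows "S \<subseteq> V \<and> connected_set m Vs S \<and> card S \<le> k \<and>
     (\<forall>T. T \<subseteq> V \<longrightarrow> card T \<le> k \<longrightarrow> f T \<le> (14 * real r + 12) * real k ^ (r - 1) * f S)"
proof -
  have finV: "finite V" and fnn: "\<And>A. A \<subseteq> V \<Longrightarrow> 0 \<le> f A"
    and fmono: "\<And>A B. A \<subseteq> V \<Longrightarrow> B \<subseteq> A \<Longrightarrow> f B \<le> f A"
    and dec1: "\<And>i. i < m \<Longrightarrow> Vs i \<subseteq> V \<and> card (Vs i) \<le> r \<and> nonneg_on (Vs i) (fs i) \<and> supermodular_on (Vs i) (fs i)"
    and fdec: "\<And>A. A \<subseteq> V \<Longrightarrow> f A = (\<Sum>i<m. fs i (A \<inter> Vs i))"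
    using Fr unfolding in_Fr_with_def r_decomposition_def nonneg_on_def monotone_on_sets_def by auto
  interpret dec V r m Vs fs
    using finV dec1 unfolding nonneg_on_def supermodular_on_def by unfold_locales auto
  obtain Tf v where Tf: "\<And>w. w \<in> V \<Longrightarrow> Tf w \<in> batch_greedy_outputs (f_sup m Vs fs {w}) (V - {w}) (r - 1) (k - 1)"
    and v: "v \<in> V" and Sv: "S = star_set m Vs fs v (Tf v)"
    and Smax: "\<And>w. w \<in> V \<Longrightarrow> f (star_set m Vs fs w (Tf w)) \<le> f S"
    using S unfolding star_exploration_outputs_def by blast
  have fsup: "f_sup m Vs fs {w} = g w" for w by (rule ext, rule f_sup_eq)
  define Lf where "Lf w = {u \<in> Tf w. g w (Tf w) - g w (Tf w - {u}) > 0}" for w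
  have star: "star_set m Vs fs w (Tf w) = insert w (Lf w)" for w
    unfolding star_set_def Lf_def fsup by auto
  have TfP: "\<exists>Ts. batch_greedy_run (g w) (V - {w}) (r - 1) (k - 1) Ts \<and> Tf w \<subseteq> V - {w} \<and>
       card (Tf w) = k - 1 \<and> Ts ((k - 1) div (r - 1)) \<subseteq> Tf w" if "w \<in> V" for w
    using Tf[OF that] unfolding batch_greedy_outputs_def fsup by auto
  have TfV: "w \<in> V \<Longrightarrow> Tf w \<subseteq> V - {w}" for w using TfP by blast
  have TfC: "w \<in> V \<Longrightarrow> card (Tf w) = k - 1" for w using TfP by blast
  have LV: "w \<in> V \<Longrightarrow> Lf w \<subseteq> Tf w" for w unfolding Lf_def by auto
  have SstarV: "w \<in> V \<Longrightarrow> insert w (Lf w) \<subseteq> V" for w using LV TfV by blast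
  define F where "F = f S"
  have SV: "S \<subseteq> V" using Sv star SstarV v by auto
  have F0: "0 \<le> F" unfolding F_def using fnn SV by auto
  have Fw: "w \<in> V \<Longrightarrow> f (insert w (Lf w)) \<le> F" for w using Smax star unfolding F_def by metis
  have fe: "f {} \<le> F" unfolding F_def using fmono SV by auto
  have fe_sum: "f {} = (\<Sum>i<m. fs i {})" using fdec[of "{}"] by simp
  have cb: "c w Z \<le> real r * F" for w Z
  proof -
    have "c w Z \<le> real r * (\<Sum>i<m. fs i {})" by (rule c_le)
    also have "\<dots> \<le> real r * F" using fe fe_sum by (intro mult_left_mono) auto
    finally show ?thesis .
  qed
  have f1: "w \<in> V \<Longrightarrow> f {w} \<le> F" for w
    using fmono[of "insert w (Lf w)" "{w}"] SstarV Fw by fastforce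
  have Gam: "psi w (Ts ((k - 1) div (r - 1))) \<le> (1 + real r) * F"
    if w: "w \<in> V" and run: "batch_greedy_run (g w) (V - {w}) (r - 1) (k - 1) Ts"
      and TsX: "Ts ((k - 1) div (r - 1)) \<subseteq> Tf w" for w Ts
  proof -
    have "psi w (Ts ((k - 1) div (r - 1))) \<le> psi w (Tf w)" using TsX TfV[OF w] by (intro psi_mono) auto
    also have "\<dots> = g w (Tf w) + c w (Tf w)" by (rule psi_eq)
    also have "g w (Tf w) \<le> g w (Lf w)" unfolding Lf_def
      using TfV[OF w] finV by (intro remove_nonpos) (auto intro: finite_subset)
    also have "g w (Lf w) \<le> (\<Sum>i<m. fs i (insert w (Lf w) \<inter> Vs i))" using LV TfV w by (intro g_le_sum) blast
    also have "\<dots> = f (insert w (Lf w))" using fdec SstarV w by metis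
    also have "\<dots> \<le> F" using Fw w by blast
    finally show ?thesis using cb[of w "Tf w"] by (simp add: algebra_simps)
  qed
  define B where "B = (k - 2) choose (r - 2)"
  have gY: "g w Y \<le> (14 * real r + 10) * real B * F"
    if w: "w \<in> V" and Y: "Y \<subseteq> V - {w}" "card Y \<le> k - 1" for w Y
  proof -
    obtain Ts where Ts: "batch_greedy_run (g w) (V - {w}) (r - 1) (k - 1) Ts" "Ts ((k - 1) div (r - 1)) \<subseteq> Tf w"
      using TfP[OF w] by blast
    have "psi w Y \<le> (14 * real r + 10) * real B * F" unfolding B_def
      using greedy_bound[OF w r2 k Ts(1) F0 Gam[OF w Ts] cb Y] .
    then show ?thesis using psi_eq[of w Y] c_nonneg[of w Y] by simp
  qed
  have Bk: "real B \<le> real k ^ (r - 2)"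
  proof -
    have "B \<le> (k - 2) ^ (r - 2)" unfolding B_def using k by (intro binomial_le_pow) auto
    also have "\<dots> \<le> k ^ (r - 2)" by (intro power_mono) auto
    finally show ?thesis by (metis of_nat_le_iff of_nat_power)
  qed
  have k1: "1 \<le> k" using k by auto
  have bound: "f T \<le> (14 * real r + 12) * real k ^ (r - 1) * F" if T: "T \<subseteq> V" "card T \<le> k" for T
  proof -
    define K where "K = 14 * real r + 10"
    have K0: "0 \<le> K" unfolding K_def by simp
    have "f T = (\<Sum>i<m. fs i (T \<inter> Vs i))" using fdec T by auto
    also have "\<dots> \<le> (\<Sum>i<m. fs i {}) + (\<Sum>w\<in>T. g w (T - {w}) + (\<Sum>i\<in>II w. fs i {w}))"
      using decomp_bound T by auto
    also have "\<dots> \<le> F + (\<Sum>w\<in>T. K * real B * F + F)"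
    proof -
      have "(\<Sum>w\<in>T. g w (T - {w}) + (\<Sum>i\<in>II w. fs i {w})) \<le> (\<Sum>w\<in>T. K * real B * F + F)"
      proof (intro sum_mono add_mono)
        fix w assume wT: "w \<in> T"
        then have w: "w \<in> V" using T by auto
        have fT: "finite T" using T finV finite_subset by auto
        have "card (T - {w}) \<le> k - 1" using T wT fT by auto
        then show "g w (T - {w}) \<le> K * real B * F" unfolding K_def using T by (intro gY[OF w]) auto
        have "(\<Sum>i\<in>II w. fs i {w}) \<le> (\<Sum>i<m. fs i ({w} \<inter> Vs i))" by (rule single_le_sum)
        also have "\<dots> = f {w}" using fdec w by auto
        also have "\<dots> \<le> F" using f1 w by auto
        finally show "(\<Sum>i\<in>II w. fs i {w}) \<le> F" .
      qed
      then show ?thesis using fe fe_sum by linarith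
    qed
    also have "\<dots> = F + real (card T) * (K * real B * F + F)" by simp
    also have "\<dots> \<le> F + real k * (K * real B * F + F)"
      using T F0 K0 by (intro add_left_mono mult_right_mono) auto
    also have "\<dots> = K * (real k * real B) * F + (1 + real k) * F" by (simp add: algebra_simps)
    also have "\<dots> \<le> K * real k ^ (r - 1) * F + 2 * real k ^ (r - 1) * F"
    proof (intro add_mono mult_right_mono mult_left_mono F0 K0)
      have "real k * real B \<le> real k * real k ^ (r - 2)" using Bk by (intro mult_left_mono) auto
      also have "\<dots> = real k ^ (r - 1)"
      proof -
        have "r - 1 = Suc (r - 2)" using r2 by arith
        then show ?thesis by simp
      qed
      finally show "real k * real B \<le> real k ^ (r - 1)" .
      have "real k ^ 1 \<le> real k ^ (r - 1)" using k1 r2 by (intro power_increasing) auto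
      then have "real k \<le> real k ^ (r - 1)" by simp
      moreover have "1 \<le> real k" using k1 by simp
      ultimately show "1 + real k \<le> 2 * real k ^ (r - 1)" by linarith
    qed
    also have "\<dots> = (14 * real r + 12) * real k ^ (r - 1) * F" unfolding K_def by (simp add: algebra_simps)
    finally show ?thesis .
  qed
  have cardS: "card S \<le> k"
  proof -
    have fL: "finite (Lf v)" using LV[OF v] TfV[OF v] finV by (meson finite_Diff finite_subset)
    have "card (insert v (Lf v)) \<le> card (Lf v) + 1" using fL by (simp add: card_insert_if)
    also have "card (Lf v) \<le> card (Tf v)" using LV[OF v] TfV[OF v] finV by (intro card_mono) (auto intro: finite_subset)
    finally show ?thesis using TfC[OF v] Sv star k1 by simp
  qed
  have conn: "connected_set m Vs S"
  proof -
    let ?R = "\<lambda>a b. a \<in> S \<and> b \<in> S \<and> adj m Vs a b"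
    have vS: "v \<in> S" using Sv star by auto
    have adjv: "u \<in> S \<Longrightarrow> u \<noteq> v \<Longrightarrow> ?R u v \<and> ?R v u" for u
    proof -
      assume u: "u \<in> S" "u \<noteq> v"
      then have uL: "u \<in> Lf v" using Sv star by auto
      then have "g v (Tf v) - g v (Tf v - {u}) > 0" unfolding Lf_def by auto
      then obtain i where "i \<in> II v" "u \<in> Vs i" using adj_of_pos by blast
      then have "adj m Vs u v" "adj m Vs v u" unfolding adj_def II_def using u by auto
      then show ?thesis using u vS by auto
    qed
    have "?R\<^sup>*\<^sup>* x v" if "x \<in> S" for x
      using adjv[OF that] by (cases "x = v") auto
    moreover have "?R\<^sup>*\<^sup>* v y" if "y \<in> S" for y
      using adjv[OF that] by (cases "y = v") auto
    ultimately show ?thesis unfolding connected_set_def using vS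
      by (meson empty_iff rtranclp_trans)
  qed
  show ?thesis using SV conn cardS bound unfolding F_def by auto
qed

lemma small_r_vacuous:
  fixes V :: "nat set"
  assumes Fr: "in_Fr_with r V f m Vs fs" and r1: "r \<le> 1" and k: "r < k" "k \<le> card V - 1"
    and conn: "connected_set m Vs V"
  shows False
proof -
  have cV: "\<And>i. i < m \<Longrightarrow> card (Vs i) \<le> r" and finV: "finite V" and VsV: "\<And>i. i < m \<Longrightarrow> Vs i \<subseteq> V"
    using Fr unfolding in_Fr_with_def r_decomposition_def by auto
  have noadj: "\<not> adj m Vs a b" for a b
  proof
    assume "adj m Vs a b"
    then obtain i where i: "i < m" "a \<in> Vs i" "b \<in> Vs i" "a \<noteq> b" unfolding adj_def by auto
    have "finite (Vs i)" using VsV[OF i(1)] finV finite_subset by auto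
    then have "card {a, b} \<le> card (Vs i)" using i by (intro card_mono) auto
    then show False using i cV[OF i(1)] r1 by auto
  qed
  have "2 \<le> card V" using k by auto
  then have "\<not> card V \<le> Suc 0" by simp
  then obtain x y where xy: "x \<in> V" "y \<in> V" "x \<noteq> y"
    using card_le_Suc0_iff_eq[OF finV] by blast
  then have "(\<lambda>a b. a \<in> V \<and> b \<in> V \<and> adj m Vs a b)\<^sup>*\<^sup>* x y" using conn unfolding connected_set_def by auto
  then have "x = y" by induction (auto simp: noadj)
  then show False using xy by simp
qed

theorem corollary1:
  fixes r :: nat
  shows "\<exists>C::real. C > 0 \<and>
    (\<forall>(V::nat set) (f::nat set \<Rightarrow> real) m Vs fs k.
       in_Fr_with r V f m Vs fs \<longrightarrow> r < k \<longrightarrow> k \<le> card V - 1 \<longrightarrow>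
       connected_set m Vs V \<longrightarrow>
       (\<forall>S \<in> star_exploration_outputs r V f m Vs fs k.
          S \<subseteq> V \<and> connected_set m Vs S \<and> card S \<le> k \<and>
          (\<forall>T. T \<subseteq> V \<longrightarrow> card T \<le> k \<longrightarrow> f T \<le> C * real k ^ (r - 1) * f S)))"
proof (rule exI[of _ "14 * real r + 12"], rule conjI)
  show "0 < 14 * real r + 12" by simp
next
  show "\<forall>(V::nat set) (f::nat set \<Rightarrow> real) m Vs fs k.
       in_Fr_with r V f m Vs fs \<longrightarrow> r < k \<longrightarrow> k \<le> card V - 1 \<longrightarrow>
       connected_set m Vs V \<longrightarrow>
       (\<forall>S \<in> star_exploration_outputs r V f m Vs fs k.
          S \<subseteq> V \<and> connected_set m Vs S \<and> card S \<le> k \<and>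
          (\<forall>T. T \<subseteq> V \<longrightarrow> card T \<le> k \<longrightarrow> f T \<le> (14 * real r + 12) * real k ^ (r - 1) * f S))"
  proof (intro allI impI ballI)
  fix V :: "nat set" and f :: "nat set \<Rightarrow> real" and m Vs fs k S
  assume Fr: "in_Fr_with r V f m Vs fs" and k: "r < k" "k \<le> card V - 1"
    and conn: "connected_set m Vs V" and S: "S \<in> star_exploration_outputs r V f m Vs fs k"
  show "S \<subseteq> V \<and> connected_set m Vs S \<and> card S \<le> k \<and>
          (\<forall>T. T \<subseteq> V \<longrightarrow> card T \<le> k \<longrightarrow> f T \<le> (14 * real r + 12) * real k ^ (r - 1) * f S)"
  proof (cases "r \<le> 1")
    case True
    then show ?thesis using small_r_vacuous[OF Fr True k conn] by simp
  next
    case False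
    then show ?thesis using main_r2[OF Fr _ k S] by simp
  qed
  qed
qed

end
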